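(* For every integer $b\ge 0$, \[ \operatorname{trace}(A_b)=p(b)+\sum_{i=0}^{b-1}2^{b-i-1}p(i), \] where $p(m)$ denotes the number of unordered partitions of $m$ (with $p(0)=1$).
   Context: For an integer $b\ge 0$, an ordered partition of $b$ is a finite sequence $(q_1,\ldots,q_k)$ of positive integers summing to $b$ (for $b=0$ the only one is the empty sequence). An ordered partition $(q_1,\ldots,q_k)$ with $k\ge1$ is nontrivially embedded into an ordered partition $(r_1,\ldots,r_\ell)$ by a choice of indices $1\le i_2<\cdots<i_k\le \ell$ with $q_j\le r_{i_j}$ for $2\le j\le k$; different index tuples count as different embeddings. A card for $b$ balls is either (i) a trivial card, given by an ordered partition $q$ of $b$, with left and right partitions both $q$; or (ii) a throw card, given by ordered partitions $q$ ($k\ge1$ parts) and $r$ of $b$ together with a nontrivial embedding of $q$ into $r$, with left partition $q$ and right partition $r$. Different index tuples give different cards, and a throw card is distinct from the trivial card even when $q=r$. $A_b$ is the square matrix with rows and columns indexed by the ordered partitions of $b$ whose $(u,v)$ entry is the number of cards for $b$ balls with left partition $u$ and right partition $v$. *)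

theory Defs
  imports Main "HOL-Library.Multiset"
begin

definition ordered_partitions :: "nat \<Rightarrow> nat list set" where
  "ordered_partitions b = {q. (\<forall>x\<in>set q. 0 < x) \<and> sum_list q = b}"

definition num_partitions :: "nat \<Rightarrow> nat" where
  "num_partitions m = card {M :: nat multiset. (\<forall>x\<in>#M. 0 < x) \<and> sum_mset M = m}"

text \<open>Nontrivial embeddings of q = (q_1,...,q_k), k \<ge> 1, into r = (r_1,...,r_l):
  index tuples i_2 < ... < i_k in {1..l} with q_j \<le> r_(i_j) for 2 \<le> j \<le> k.
  Encoded 0-based: the list is has length k-1, entry is!j (j < k-1) is the 0-based
  index i_(j+2) - 1, and the condition reads q!(j+1) \<le> r!(is!j).\<close>
definition nontrivial_embeddings :: "nat list \<Rightarrow> nat list \<Rightarrow> nat list set" where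
  "nontrivial_embeddings q r = {is. length is = length q - 1 \<and> sorted_wrt (<) is \<and>
      (\<forall>i\<in>set is. i < length r) \<and>
      (\<forall>j < length q - 1. q ! (j+1) \<le> r ! (is ! j))}"

datatype card = Trivial "nat list" | Throw "nat list" "nat list" "nat list"

fun left_part :: "card \<Rightarrow> nat list" where
  "left_part (Trivial q) = q"
| "left_part (Throw q r e) = q"

fun right_part :: "card \<Rightarrow> nat list" where
  "right_part (Trivial q) = q"
| "right_part (Throw q r e) = r"

definition cards :: "nat \<Rightarrow> card set" where
  "cards b = {Trivial q | q. q \<in> ordered_partitions b} \<union>
     {Throw q r e | q r e. q \<in> ordered_partitions b \<and> r \<in> ordered_partitions b \<and>
        q \<noteq> [] \<and> e \<in> nontrivial_embeddings q r}"

definition A :: "nat \<Rightarrow> nat list \<Rightarrow> nat list \<Rightarrow> nat" where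
  "A b u v = card {c \<in> cards b. left_part c = u \<and> right_part c = v}"

definition trace_A :: "nat \<Rightarrow> nat" where
  "trace_A b = (\<Sum>u\<in>ordered_partitions b. A b u u)"

end

theory Submission
  imports Defs
begin


abbreviation OP where "OP \<equiv> ordered_partitions"

lemma pos_len_le_sum: "\<forall>x\<in>set q. 0 < (x::nat) \<Longrightarrow> length q \<le> sum_list q"
  by (induction q) auto

lemma finite_OP: "finite (OP n)"
proof -
  have "OP n \<subseteq> {xs. set xs \<subseteq> {..n} \<and> length xs \<le> n}"
    using pos_len_le_sum member_le_sum_list
    by (fastforce simp: ordered_partitions_def)
  then show ?thesis using finite_lists_length_le[of "{..n}" n] finite_subset by blast
qed

lemma pos_sum0: "\<forall>x\<in>set q. 0 < (x::nat) \<Longrightarrow> sum_list q = 0 \<Longrightarrow> q = []"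
  by (cases q) auto

lemma OP_0: "OP 0 = {[]}"
proof (intro equalityI subsetI)
  fix x :: "nat list" assume "x \<in> OP 0" then show "x \<in> {[]}" using pos_sum0 by (simp add: ordered_partitions_def)
next
  fix x :: "nat list" assume "x \<in> {[]}" then show "x \<in> OP 0" by (simp add: ordered_partitions_def)
qed

lemma OP_1: "OP 1 = {[1]}"
proof -
  have "xs = [1]" if "xs \<in> OP 1" for xs
  proof (cases xs)
    case Nil then show ?thesis using that by (simp add: ordered_partitions_def)
  next
    case (Cons a t)
    have p: "0 < a" "\<forall>x\<in>set t. 0 < x" "a + sum_list t = 1" using that Cons by (auto simp: ordered_partitions_def)
    then have "a = 1" "sum_list t = 0" by arith+
    then have "t = []" using pos_sum0 p(2) by blast
    then show ?thesis using Cons \<open>a = 1\<close> by simp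
  qed
  moreover have "[1] \<in> OP 1" by (simp add: ordered_partitions_def)
  ultimately show ?thesis by blast
qed

fun incfirst :: "nat list \<Rightarrow> nat list" where
  "incfirst [] = []" | "incfirst (x # xs) = Suc x # xs"

lemma OP_SS: "OP (Suc (Suc n)) = (Cons 1) ` OP (Suc n) \<union> incfirst ` OP (Suc n)"
proof
  show "OP (Suc (Suc n)) \<subseteq> (Cons 1) ` OP (Suc n) \<union> incfirst ` OP (Suc n)"
  proof
    fix xs assume xs: "xs \<in> OP (Suc (Suc n))"
    then obtain a t where at: "xs = a # t"
      by (cases xs) (auto simp: ordered_partitions_def)
    show "xs \<in> (Cons 1) ` OP (Suc n) \<union> incfirst ` OP (Suc n)"
    proof (cases "a = 1")
      case True
      then have "t \<in> OP (Suc n)" using xs at by (auto simp: ordered_partitions_def)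
      then show ?thesis using at True by auto
    next
      case False
      then obtain a' where a': "a = Suc a'" "0 < a'" using xs at
        by (auto simp: ordered_partitions_def) (metis One_nat_def gr0_conv_Suc neq0_conv)
      then have "a' # t \<in> OP (Suc n)" using xs at by (auto simp: ordered_partitions_def)
      moreover have "xs = incfirst (a' # t)" using at a' by simp
      ultimately show ?thesis by blast
    qed
  qed
next
  show "(Cons 1) ` OP (Suc n) \<union> incfirst ` OP (Suc n) \<subseteq> OP (Suc (Suc n))"
  proof -
    have "incfirst xs \<in> OP (Suc (Suc n))" if "xs \<in> OP (Suc n)" for xs
      using that by (cases xs) (auto simp: ordered_partitions_def)
    then show ?thesis by (auto simp: ordered_partitions_def)
  qed
qed

lemma card_OP_SS: "card (OP (Suc (Suc n))) = 2 * card (OP (Suc n))"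
proof -
  have ne: "xs \<noteq> []" if "xs \<in> OP (Suc n)" for xs using that by (auto simp: ordered_partitions_def)
  have inj: "inj_on incfirst (OP (Suc n))"
  proof
    fix x y assume "x \<in> OP (Suc n)" "y \<in> OP (Suc n)" "incfirst x = incfirst y"
    then show "x = y" using ne by (cases x; cases y) auto
  qed
  have disj: "(Cons 1) ` OP (Suc n) \<inter> incfirst ` OP (Suc n) = {}"
  proof -
    have H: "1 # x \<noteq> incfirst y" if "y \<in> OP (Suc n)" for x y
      using that ne[OF that] by (cases y) (auto simp: ordered_partitions_def)
    show ?thesis
    proof (rule equals0I)
      fix z assume "z \<in> (Cons 1) ` OP (Suc n) \<inter> incfirst ` OP (Suc n)"
      then obtain x y where "z = 1 # x" "y \<in> OP (Suc n)" "z = incfirst y" by blast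
      then show False using H by metis
    qed
  qed
  have "card (OP (Suc (Suc n))) = card ((Cons 1) ` OP (Suc n)) + card (incfirst ` OP (Suc n))"
    unfolding OP_SS by (rule card_Un_disjoint[OF finite_imageI[OF finite_OP] finite_imageI[OF finite_OP] disj])
  also have "\<dots> = 2 * card (OP (Suc n))"
    using card_image[OF inj] card_image[of "Cons 1" "OP (Suc n)"] by simp
  finally show ?thesis .
qed

definition cnt :: "nat \<Rightarrow> nat" where "cnt n = (if n = 0 then 1 else 2 ^ (n - 1))"

lemma card_OP: "card (OP n) = cnt n"
proof (induction n rule: nat_less_induct)
  case (1 n)
  show ?case
  proof (cases n)
    case 0 then show ?thesis by (simp add: OP_0 cnt_def)
  next
    case (Suc m)
    show ?thesis
    proof (cases m)
      case 0 then show ?thesis using Suc OP_1 by (simp add: cnt_def)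
    next
      case (Suc k)
      have "card (OP m) = cnt m" using 1 \<open>n = Suc m\<close> by simp
      then show ?thesis using \<open>n = Suc m\<close> Suc card_OP_SS[of k] by (simp add: cnt_def)
    qed
  qed
qed



lemma finite_emb: "finite (nontrivial_embeddings q r)"
proof -
  have "nontrivial_embeddings q r \<subseteq> {xs. set xs \<subseteq> {..<length r} \<and> length xs \<le> length q}"
    by (auto simp: nontrivial_embeddings_def)
  then show ?thesis using finite_lists_length_le[of "{..<length r}"] finite_subset by blast
qed

lemma fiber_eq:
  assumes "u \<in> OP b"
  shows "{c \<in> cards b. left_part c = u \<and> right_part c = u} =
     insert (Trivial u) (Throw u u ` {e. u \<noteq> [] \<and> e \<in> nontrivial_embeddings u u})"
  using assms by (auto simp: cards_def)

lemma card_fiber: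
  assumes "u \<in> OP b"
  shows "A b u u = Suc (card {e. u \<noteq> [] \<and> e \<in> nontrivial_embeddings u u})"
proof -
  have fin: "finite {e. u \<noteq> [] \<and> e \<in> nontrivial_embeddings u u}"
    using finite_emb[of u u] by (rule finite_subset[rotated]) auto
  have "card (Throw u u ` {e. u \<noteq> [] \<and> e \<in> nontrivial_embeddings u u})
        = card {e. u \<noteq> [] \<and> e \<in> nontrivial_embeddings u u}"
    by (rule card_image) (auto simp: inj_on_def)
  then show ?thesis unfolding A_def fiber_eq[OF assms]
    using fin by (subst card_insert_disjoint) auto
qed

definition om :: "nat \<Rightarrow> nat \<Rightarrow> nat list" where
  "om m n = map (\<lambda>j. if j < m then j else Suc j) [0..<n]"

lemma om_len[simp]: "length (om m n) = n" by (simp add: om_def)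
lemma om_nth: "j < n \<Longrightarrow> om m n ! j = (if j < m then j else Suc j)" by (simp add: om_def)

lemma om_sorted: "sorted_wrt (<) (om m n)"
  by (auto simp: sorted_wrt_iff_nth_less om_nth)

lemma om_set: "m \<le> n \<Longrightarrow> set (om m n) = {..n} - {m}"
proof -
  assume mn: "m \<le> n"
  have "set (om m n) = (\<lambda>j. if j < m then j else Suc j) ` {..<n}"
    by (auto simp: om_def)
  also have "\<dots> = {..n} - {m}"
  proof (intro equalityI subsetI)
    fix x assume "x \<in> (\<lambda>j. if j < m then j else Suc j) ` {..<n}"
    then show "x \<in> {..n} - {m}" using mn by auto
  next
    fix x assume "x \<in> {..n} - {m}"
    then have "x \<le> n" "x \<noteq> m" by auto
    show "x \<in> (\<lambda>j. if j < m then j else Suc j) ` {..<n}"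
    proof (cases "x < m")
      case True then show ?thesis using mn by (intro image_eqI[of _ _ x]) auto
    next
      case False then show ?thesis using \<open>x \<le> n\<close> \<open>x \<noteq> m\<close>
        by (intro image_eqI[of _ _ "x - 1"]) auto
    qed
  qed
  finally show ?thesis .
qed

lemma om_inj: "inj_on (\<lambda>m. om m n) {..<Suc n}"
proof
  fix m m' assume "m \<in> {..<Suc n}" "m' \<in> {..<Suc n}" and eq: "om m n = om m' n"
  then have "set (om m n) = set (om m' n)" by simp
  moreover have "m \<le> n" "m' \<le> n" using \<open>m \<in> _\<close> \<open>m' \<in> _\<close> by simp_all
  ultimately have E: "{..n} - {m} = {..n} - {m'}" using om_set[of m n] om_set[of m' n] by simp
  show "m = m'"
  proof (rule ccontr)
    assume "m \<noteq> m'"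
    then have "m \<in> {..n} - {m'}" using \<open>m \<le> n\<close> by simp
    then show False using E by (metis DiffD2 singletonI)
  qed
qed

definition dpre :: "nat list \<Rightarrow> nat set" where
  "dpre u = {m. m < length u \<and> (\<forall>j<m. u ! (j+1) \<le> u ! j)}"

lemma emb_eq:
  assumes "u \<noteq> []"
  shows "nontrivial_embeddings u u = (\<lambda>m. om m (length u - 1)) ` dpre u"
proof -
  let ?n = "length u - 1"
  have cond: "om m ?n \<in> nontrivial_embeddings u u \<longleftrightarrow> (\<forall>j<m. u ! (j+1) \<le> u ! j)"
    if "m \<le> ?n" for m
  proof -
    have "set (om m ?n) \<subseteq> {..<length u}"
    proof
      fix x assume "x \<in> set (om m ?n)"
      then have "x \<le> ?n" using om_set[OF that] by simp
      then show "x \<in> {..<length u}" using assms by (cases u) auto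
    qed
    moreover have "(\<forall>j < ?n. u ! (j+1) \<le> u ! (om m ?n ! j)) \<longleftrightarrow> (\<forall>j<m. u ! (j+1) \<le> u ! j)"
    proof
      assume H: "\<forall>j < ?n. u ! (j+1) \<le> u ! (om m ?n ! j)"
      show "\<forall>j<m. u ! (j+1) \<le> u ! j"
      proof (intro allI impI)
        fix j assume "j < m"
        then have "j < ?n" "om m ?n ! j = j" using that om_nth[of j ?n m] by auto
        then show "u ! (j+1) \<le> u ! j" using H by metis
      qed
    next
      assume H: "\<forall>j<m. u ! (j+1) \<le> u ! j"
      show "\<forall>j < ?n. u ! (j+1) \<le> u ! (om m ?n ! j)"
      proof (intro allI impI)
        fix j assume j: "j < ?n"
        show "u ! (j+1) \<le> u ! (om m ?n ! j)"
        proof (cases "j < m")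
          case True then show ?thesis using H om_nth[OF j, of m] by simp
        next
          case False then show ?thesis using om_nth[OF j, of m] by simp
        qed
      qed
    qed
    ultimately show ?thesis using om_sorted by (auto simp: nontrivial_embeddings_def)
  qed
  show ?thesis
  proof
    show "(\<lambda>m. om m ?n) ` dpre u \<subseteq> nontrivial_embeddings u u"
    proof
      fix x assume "x \<in> (\<lambda>m. om m ?n) ` dpre u"
      then obtain m where "x = om m ?n" "m \<in> dpre u" by blast
      then have "m \<le> ?n" "\<forall>j<m. u ! (j+1) \<le> u ! j" by (auto simp: dpre_def)
      then show "x \<in> nontrivial_embeddings u u" using cond \<open>x = _\<close> by blast
    qed
  next
    show "nontrivial_embeddings u u \<subseteq> (\<lambda>m. om m ?n) ` dpre u"
    proof
      fix e assume e: "e \<in> nontrivial_embeddings u u"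
      then have len: "length e = ?n" and srt: "sorted_wrt (<) e" and sub: "set e \<subseteq> {..?n}"
        using assms by (auto simp: nontrivial_embeddings_def)
      have dist: "distinct e" using srt strict_sorted_iff by blast
      have ce: "card (set e) = ?n" using distinct_card[OF dist] len by simp
      have "card ({..?n} - set e) = 1"
        using card_Diff_subset[OF _ sub] ce by simp
      then obtain m where m: "{..?n} - set e = {m}" using card_1_singletonE by blast
      then have mn: "m \<le> ?n" by auto
      have "set e = {..?n} - {m}" using m sub by auto
      then have "set e = set (om m ?n)" using om_set[OF mn] by simp
      then have eom: "e = om m ?n"
        using sorted_distinct_set_unique[of e "om m ?n"] srt om_sorted[of m ?n]
        by (simp add: strict_sorted_iff)
      have "\<forall>j<m. u ! (j+1) \<le> u ! j" using cond[OF mn] e eom by blast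
      moreover have "m < length u" using mn assms by (cases u) auto
      ultimately have "m \<in> dpre u" by (simp add: dpre_def)
      then show "e \<in> (\<lambda>m. om m ?n) ` dpre u" using eom by blast
    qed
  qed
qed

lemma card_emb: "card {e. u \<noteq> [] \<and> e \<in> nontrivial_embeddings u u} = card (dpre u)"
proof (cases "u = []")
  case True then show ?thesis by (simp add: dpre_def)
next
  case False
  have "inj_on (\<lambda>m. om m (length u - 1)) (dpre u)"
    by (rule inj_on_subset[OF om_inj]) (use False in \<open>auto simp: dpre_def\<close>)
  then show ?thesis using False emb_eq[OF False] card_image by simp
qed

lemma trace_eq: "trace_A b = cnt b + (\<Sum>u\<in>OP b. card (dpre u))"
proof -
  have "trace_A b = (\<Sum>u\<in>OP b. 1 + card (dpre u))"
    unfolding trace_A_def by (rule sum.cong) (simp_all add: card_fiber card_emb)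
  also have "\<dots> = card (OP b) + (\<Sum>u\<in>OP b. card (dpre u))"
    by (simp add: sum_Suc)
  finally show ?thesis by (simp add: card_OP)
qed



definition D :: "nat \<Rightarrow> nat list set" where
  "D i = {x \<in> OP i. sorted (rev x)}"

lemma finite_D: "finite (D i)"
  using finite_OP[of i] by (rule finite_subset[rotated]) (auto simp: D_def)

lemma sorted_rev_nth: "sorted (rev (x::nat list)) \<longleftrightarrow> (\<forall>j. Suc j < length x \<longrightarrow> x ! (Suc j) \<le> x ! j)"
proof -
  have tr: "transp (\<lambda>a b::nat. b \<le> a)" by (auto simp: transp_def)
  have "sorted (rev x) \<longleftrightarrow> sorted_wrt (\<lambda>a b. b \<le> a) x"
    by (simp add: sorted_wrt_rev)
  also have "\<dots> \<longleftrightarrow> (\<forall>j. Suc j < length x \<longrightarrow> x ! (Suc j) \<le> x ! j)"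
    using sorted_wrt_iff_nth_Suc_transp[OF tr, of x] by simp
  finally show ?thesis .
qed

lemma num_partitions_D: "num_partitions i = card (D i)"
proof -
  let ?P = "{M :: nat multiset. (\<forall>x\<in>#M. 0 < x) \<and> sum_mset M = i}"
  have "bij_betw mset (D i) ?P"
  proof (rule bij_betw_byWitness[where f' = "\<lambda>M. rev (sorted_list_of_multiset M)"])
    show "\<forall>a\<in>D i. rev (sorted_list_of_multiset (mset a)) = a"
    proof
      fix a assume "a \<in> D i"
      then have "sorted (rev a)" by (simp add: D_def)
      then have "sort a = rev a" by (intro properties_for_sort) simp_all
      then show "rev (sorted_list_of_multiset (mset a)) = a" by simp
    qed
    show "\<forall>M\<in>?P. mset (rev (sorted_list_of_multiset M)) = M" by simp
    show "mset ` D i \<subseteq> ?P"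
      by (auto simp: D_def ordered_partitions_def sum_mset_sum_list)
    show "(\<lambda>M. rev (sorted_list_of_multiset M)) ` ?P \<subseteq> D i"
    proof
      fix x assume "x \<in> (\<lambda>M. rev (sorted_list_of_multiset M)) ` ?P"
      then obtain M where M: "M \<in> ?P" "x = rev (sorted_list_of_multiset M)" by blast
      have "sum_list (sorted_list_of_multiset M) = sum_mset M"
        by (metis sum_mset_sum_list mset_sorted_list_of_multiset)
      then show "x \<in> D i" using M by (auto simp: D_def ordered_partitions_def)
    qed
  qed
  then show ?thesis unfolding num_partitions_def by (simp add: bij_betw_same_card)
qed

definition T :: "nat \<Rightarrow> (nat list \<times> nat list) set" where
  "T b = (\<Union>i\<in>{1..b}. D i \<times> OP (b - i))"

lemma bij_ST: "bij_betw (\<lambda>(u, m). (take (Suc m) u, drop (Suc m) u)) (Sigma (OP b) dpre) (T b)"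
proof (rule bij_betw_byWitness[where f' = "\<lambda>(x, y). (x @ y, length x - 1)"])
  show "\<forall>a\<in>Sigma (OP b) dpre.
     (\<lambda>(x, y). (x @ y, length x - 1)) ((\<lambda>(u, m). (take (Suc m) u, drop (Suc m) u)) a) = a"
  proof
    fix a assume a: "a \<in> Sigma (OP b) dpre"
    then obtain u m where am: "a = (u, m)" by (cases a)
    then have "m < length u" using a by (auto simp: dpre_def)
    then have "length (take (Suc m) u) - 1 = m" by simp
    then show "(\<lambda>(x, y). (x @ y, length x - 1)) ((\<lambda>(u, m). (take (Suc m) u, drop (Suc m) u)) a) = a"
      using am by simp
  qed
  show "\<forall>a'\<in>T b. (\<lambda>(u, m). (take (Suc m) u, drop (Suc m) u)) ((\<lambda>(x, y). (x @ y, length x - 1)) a') = a'"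
  proof
    fix a' assume "a' \<in> T b"
    then obtain x y i where a': "a' = (x, y)" "x \<in> D i" "1 \<le> i" by (auto simp: T_def)
    then have "length x \<le> sum_list x" "sum_list x = i"
      using pos_len_le_sum by (auto simp: D_def ordered_partitions_def)
    then have "x \<noteq> []" using \<open>1 \<le> i\<close> by auto
    then show "(\<lambda>(u, m). (take (Suc m) u, drop (Suc m) u)) ((\<lambda>(x, y). (x @ y, length x - 1)) a') = a'"
      using a' by simp
  qed
  show "(\<lambda>(u, m). (take (Suc m) u, drop (Suc m) u)) ` Sigma (OP b) dpre \<subseteq> T b"
  proof
    fix z assume "z \<in> (\<lambda>(u, m). (take (Suc m) u, drop (Suc m) u)) ` Sigma (OP b) dpre"
    then obtain a where a: "a \<in> Sigma (OP b) dpre" "z = (\<lambda>(u, m). (take (Suc m) u, drop (Suc m) u)) a"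
      by blast
    then obtain u m where "a = (u, m)" by (cases a)
    then have z: "z = (take (Suc m) u, drop (Suc m) u)" and u: "u \<in> OP b" and m: "m \<in> dpre u"
      using a by auto
    let ?x = "take (Suc m) u" and ?y = "drop (Suc m) u"
    define i where "i = sum_list ?x"
    have pos: "\<forall>a\<in>set u. 0 < a" and su: "sum_list u = b" using u by (auto simp: ordered_partitions_def)
    have ml: "m < length u" and mc: "\<forall>j<m. u ! (j+1) \<le> u ! j" using m by (auto simp: dpre_def)
    have posx: "\<forall>a\<in>set ?x. 0 < a" using pos by (meson in_set_takeD)
    have posy: "\<forall>a\<in>set ?y. 0 < a" using pos by (meson in_set_dropD)
    have "sum_list ?x + sum_list ?y = b"
      using su by (metis append_take_drop_id sum_list_append)
    then have sy: "sum_list ?y = b - i" and ib: "i \<le> b" unfolding i_def by auto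
    have "length ?x \<le> sum_list ?x" using pos_len_le_sum[OF posx] .
    then have i1: "1 \<le> i" using ml unfolding i_def by simp
    have "sorted (rev ?x)" unfolding sorted_rev_nth
    proof (intro allI impI)
      fix j assume "Suc j < length ?x"
      then have "j < m" "Suc j < Suc m" "j < Suc m" by auto
      then show "?x ! Suc j \<le> ?x ! j" using mc by simp
    qed
    then have "?x \<in> D i" using posx by (simp add: D_def ordered_partitions_def i_def)
    moreover have "?y \<in> OP (b - i)" using posy sy by (simp add: ordered_partitions_def)
    ultimately show "z \<in> T b" unfolding T_def z using i1 ib by auto
  qed
  show "(\<lambda>(x, y). (x @ y, length x - 1)) ` T b \<subseteq> Sigma (OP b) dpre"
  proof
    fix z assume "z \<in> (\<lambda>(x, y). (x @ y, length x - 1)) ` T b"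
    then obtain x y i where z: "z = (x @ y, length x - 1)" and x: "x \<in> D i" and y: "y \<in> OP (b - i)"
      and i: "1 \<le> i" "i \<le> b" by (auto simp: T_def)
    have posx: "\<forall>a\<in>set x. 0 < a" and sx: "sum_list x = i" and sr: "sorted (rev x)"
      using x by (auto simp: D_def ordered_partitions_def)
    have posy: "\<forall>a\<in>set y. 0 < a" and sy: "sum_list y = b - i"
      using y by (auto simp: ordered_partitions_def)
    have "length x \<le> sum_list x" using pos_len_le_sum[OF posx] .
    have "x \<noteq> []" using sx i by auto
    have "x @ y \<in> OP b" using posx posy sx sy i by (auto simp: ordered_partitions_def)
    moreover have "length x - 1 \<in> dpre (x @ y)"
    proof -
      have "\<forall>j<length x - 1. (x @ y) ! (j+1) \<le> (x @ y) ! j"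
      proof (intro allI impI)
        fix j assume j: "j < length x - 1"
        then have "x ! Suc j \<le> x ! j" using sr unfolding sorted_rev_nth by simp
        moreover have "j+1 < length x" "j < length x" using j by auto
        ultimately show "(x @ y) ! (j+1) \<le> (x @ y) ! j" by (simp add: nth_append)
      qed
      moreover have "length x - 1 < length (x @ y)" using \<open>x \<noteq> []\<close> by (cases x) auto
      ultimately show ?thesis by (simp add: dpre_def)
    qed
    ultimately show "z \<in> Sigma (OP b) dpre" using z by simp
  qed
qed

lemma sum_dpre: "(\<Sum>u\<in>OP b. card (dpre u)) = (\<Sum>i\<in>{1..b}. num_partitions i * cnt (b - i))"
proof -
  have fd: "finite (dpre u)" for u by (simp add: dpre_def)
  have "(\<Sum>u\<in>OP b. card (dpre u)) = card (Sigma (OP b) dpre)"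
    using finite_OP fd by simp
  also have "\<dots> = card (T b)" using bij_ST by (rule bij_betw_same_card)
  also have "\<dots> = (\<Sum>i\<in>{1..b}. card (D i \<times> OP (b - i)))"
    unfolding T_def
  proof (rule card_UN_disjoint)
    show "finite {1..b}" by simp
    show "\<forall>i\<in>{1..b}. finite (D i \<times> OP (b - i))" using finite_D finite_OP by simp
    show "\<forall>i\<in>{1..b}. \<forall>j\<in>{1..b}. i \<noteq> j \<longrightarrow> D i \<times> OP (b - i) \<inter> D j \<times> OP (b - j) = {}"
    proof (intro ballI impI)
      fix i j :: nat assume "i \<noteq> j"
      show "D i \<times> OP (b - i) \<inter> D j \<times> OP (b - j) = {}"
      proof (rule equals0I)
        fix z assume "z \<in> D i \<times> OP (b - i) \<inter> D j \<times> OP (b - j)"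
        then have "fst z \<in> D i" "fst z \<in> D j" by auto
        then have "sum_list (fst z) = i" "sum_list (fst z) = j" by (simp_all add: D_def ordered_partitions_def)
        then show False using \<open>i \<noteq> j\<close> by simp
      qed
    qed
  qed
  also have "\<dots> = (\<Sum>i\<in>{1..b}. num_partitions i * cnt (b - i))"
    by (simp add: card_cartesian_product num_partitions_D card_OP)
  finally show ?thesis .
qed

theorem theorem10:
  fixes b :: nat
  shows "trace_A b = num_partitions b + (\<Sum>i<b. 2 ^ (b - i - 1) * num_partitions i)"
proof -
  have p0: "num_partitions 0 = 1"
  proof -
    have "D 0 = {x::nat list. x \<in> {[]} \<and> sorted (rev x)}" unfolding D_def OP_0 by (rule refl)
    also have "\<dots> = {[]}" by (rule set_eqI) auto
    finally have "D 0 = {[]}" .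
    then show ?thesis by (simp add: num_partitions_D)
  qed
  have tr: "trace_A b = cnt b + (\<Sum>i\<in>{1..b}. num_partitions i * cnt (b - i))"
    using trace_eq sum_dpre by simp
  show ?thesis
  proof (cases b)
    case 0 then show ?thesis using tr p0 by (simp add: cnt_def)
  next
    case (Suc n)
    have c1: "(\<Sum>i\<in>{1..n}. num_partitions i * cnt (Suc n - i)) = (\<Sum>i\<in>{1..n}. 2 ^ (Suc n - i - 1) * num_partitions i)"
      by (rule sum.cong) (auto simp: cnt_def)
    have "(\<Sum>i\<in>{1..Suc n}. num_partitions i * cnt (Suc n - i))
        = num_partitions (Suc n) + (\<Sum>i\<in>{1..n}. num_partitions i * cnt (Suc n - i))"
      by (simp add: sum.cl_ivl_Suc cnt_def)
    moreover have "(\<Sum>i<Suc n. 2 ^ (Suc n - i - 1) * num_partitions i)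
        = 2 ^ n * num_partitions 0 + (\<Sum>i\<in>{1..n}. 2 ^ (Suc n - i - 1) * num_partitions i)"
    proof -
      have "{..<Suc n} = insert 0 {1..n}" by auto
      moreover have "0 \<notin> {1..n}" by simp
      ultimately show ?thesis by (simp add: sum.insert)
    qed
    ultimately show ?thesis using tr Suc c1 p0 by (simp add: cnt_def)
  qed
qed

end
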